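(* Let $m\ge 3$ and let $K\ne\Delta_{[m]}$ be a simplicial complex on $[m]$. Then $\chi(\mathrm{Bier}(K))=m-1$ if and only if $K$ is, up to relabeling of vertices, obtained from one of the three complexes on $[3]$ $$G_4=\{\varnothing,\{1\},\{2\},\{1,2\}\},\quad \Gamma_4=\{\varnothing,\{1\},\{2\},\{3\},\{1,2\},\{1,3\}\},\quad \Gamma_6=\{\varnothing,\{1\},\{2\},\{3\}\}$$ by a finite sequence of the following two operations: (1) taking a cone: a complex $R$ on $[n]$ is replaced by $\{\sigma,\sigma\cup\{n+1\}:\sigma\in R\}$ on $[n+1]$; (2) taking the Alexander dual: a complex $R\ne\Delta_{[n]}$ on $[n]$ is replaced by $R^\vee$, regarded as a complex on $[n]$ via $i'\mapsto i$.
   Context: A simplicial complex $K$ on $[m]=\{1,\dots,m\}$ is a nonempty family of subsets of $[m]$ closed under taking subsets (elements $i$ with $\{i\}\notin K$ are ghost vertices; e.g. $3$ is a ghost vertex of $G_4$). $V(K)=\{i:\{i\}\in K\}$. $\Delta_{[n]}=2^{[n]}$. Let $[n']=\{1',\dots,n'\}$ be a disjoint copy of $[n]$, $I'=\{i':i\in I\}$. For $K\ne\Delta_{[n]}$ on $[n]$ the Alexander dual $K^\vee$ is the complex on $[n']$ with $J'\in K^\vee$ iff $[n]\setminus J\notin K$. The Bier sphere $\mathrm{Bier}(K)$ is the complex on $[n]\sqcup[n']$ with faces $I\sqcup J'$, $I\in K$, $J'\in K^\vee$, $I\cap J=\varnothing$. The chromatic number $\chi(L)$ is the least number of colors in a map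 $c\colon V(L)\to C$ with $c(u)\ne c(v)$ whenever $\{u,v\}\in L$. *)

theory Defs
  imports Main
begin

definition simplicial_complex :: "nat \<Rightarrow> nat set set \<Rightarrow> bool" where
  "simplicial_complex m K \<longleftrightarrow> K \<noteq> {} \<and> (\<forall>\<sigma>\<in>K. \<sigma> \<subseteq> {1..m}) \<and>
     (\<forall>\<sigma>\<in>K. \<forall>\<tau>. \<tau> \<subseteq> \<sigma> \<longrightarrow> \<tau> \<in> K)"

definition full_simplex :: "nat \<Rightarrow> nat set set" where
  "full_simplex n = Pow {1..n}"

text \<open>Vertex set V(L) of a complex L (ghost vertices excluded).\<close>
definition vertices :: "'a set set \<Rightarrow> 'a set" where
  "vertices L = {v. {v} \<in> L}"

definition alex_dual :: "nat \<Rightarrow> nat set set \<Rightarrow> nat set set" where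
  "alex_dual n K = {J. J \<subseteq> {1..n} \<and> {1..n} - J \<notin> K}"

text \<open>Bier sphere on [n] disjoint-union [n']: i is Inl i, i' is Inr i.\<close>
definition bier :: "nat \<Rightarrow> nat set set \<Rightarrow> (nat + nat) set set" where
  "bier n K = {Inl ` I \<union> Inr ` J | I J. I \<in> K \<and> J \<in> alex_dual n K \<and> I \<inter> J = {}}"

definition chromatic_number :: "'a set set \<Rightarrow> nat" where
  "chromatic_number L = (LEAST k. \<exists>c :: 'a \<Rightarrow> nat.
      (\<forall>v\<in>vertices L. c v < k) \<and>
      (\<forall>u\<in>vertices L. \<forall>v\<in>vertices L. {u, v} \<in> L \<and> u \<noteq> v \<longrightarrow> c u \<noteq> c v))"

definition cone :: "nat \<Rightarrow> nat set set \<Rightarrow> nat set set" where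
  "cone n R = R \<union> {insert (n + 1) \<sigma> | \<sigma>. \<sigma> \<in> R}"

definition G4 :: "nat set set" where
  "G4 = {{}, {1}, {2}, {1, 2}}"

definition Gamma4 :: "nat set set" where
  "Gamma4 = {{}, {1}, {2}, {3}, {1, 2}, {1, 3}}"

definition Gamma6 :: "nat set set" where
  "Gamma6 = {{}, {1}, {2}, {3}}"

inductive obtainable :: "nat \<Rightarrow> nat set set \<Rightarrow> bool" where
  base_G4: "obtainable 3 G4"
| base_Gamma4: "obtainable 3 Gamma4"
| base_Gamma6: "obtainable 3 Gamma6"
| cone_step: "obtainable n R \<Longrightarrow> obtainable (n + 1) (cone n R)"
| dual_step: "obtainable n R \<Longrightarrow> R \<noteq> full_simplex n \<Longrightarrow> obtainable n (alex_dual n R)"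

end

theory Submission
  imports Defs
begin


definition Fam :: "nat \<Rightarrow> nat set \<Rightarrow> nat set \<Rightarrow> nat set set" where
  "Fam m T G = {\<sigma>. \<sigma> \<subseteq> {1..m} \<and> \<sigma> \<inter> G = {} \<and> card (\<sigma> \<inter> T) \<le> 1}"

lemma sub3: "\<sigma> \<subseteq> {1..3::nat} \<Longrightarrow> \<sigma> \<in> {{},{1},{2},{3},{1,2},{1,3},{2,3},{1,2,3}}"
proof -
  assume a: "\<sigma> \<subseteq> {1..3::nat}"
  have e: "{1..3::nat} = {1,2,3}" by auto
  have "\<sigma> \<in> Pow {1,2,3}" using a e by auto
  then show ?thesis by (simp add: Pow_insert) blast
qed

lemma G4_Fam: "G4 = Fam 3 {} {3}"
  unfolding G4_def Fam_def
  apply (rule set_eqI, rule iffI)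
   apply auto[1]
  apply (unfold mem_Collect_eq)
  apply (elim conjE)
  apply (drule sub3) apply auto
  done

lemma Gamma4_Fam: "Gamma4 = Fam 3 {2,3} {}"
  unfolding Gamma4_def Fam_def
  apply (rule set_eqI, rule iffI)
   apply auto[1]
  apply (unfold mem_Collect_eq)
  apply (elim conjE)
  apply (drule sub3) apply auto
  done

lemma Gamma6_Fam: "Gamma6 = Fam 3 {1,2,3} {}"
  unfolding Gamma6_def Fam_def
  apply (rule set_eqI, rule iffI)
   apply auto[1]
  apply (unfold mem_Collect_eq)
  apply (elim conjE)
  apply (drule sub3) apply auto
  done

definition valid :: "nat \<Rightarrow> nat set \<Rightarrow> nat set \<Rightarrow> bool" where
  "valid m T G \<longleftrightarrow> T \<subseteq> {1..m} \<and> G \<subseteq> {1..m} \<and> T \<inter> G = {} \<and>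
     ((T = {} \<and> (card G = 1 \<or> card G = 2)) \<or> (G = {} \<and> (card T = 2 \<or> card T = 3)))"

lemma cone_Fam:
  assumes "T \<subseteq> {1..n}" "G \<subseteq> {1..n}"
  shows "cone n (Fam n T G) = Fam (n+1) T G"
proof (rule set_eqI, rule iffI)
  fix \<sigma> assume "\<sigma> \<in> cone n (Fam n T G)"
  then consider "\<sigma> \<in> Fam n T G" | \<tau> where "\<tau> \<in> Fam n T G" "\<sigma> = insert (n+1) \<tau>"
    unfolding cone_def by blast
  then show "\<sigma> \<in> Fam (n+1) T G"
  proof cases
    case 1 then show ?thesis unfolding Fam_def by auto
  next
    case 2
    have nG: "n+1 \<notin> G" "n+1 \<notin> T" using assms by auto
    have "\<sigma> \<inter> G = \<tau> \<inter> G" "\<sigma> \<inter> T = \<tau> \<inter> T" using 2 nG by auto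
    then show ?thesis using 2 unfolding Fam_def by auto
  qed
next
  fix \<sigma> assume s: "\<sigma> \<in> Fam (n+1) T G"
  have nG: "n+1 \<notin> G" "n+1 \<notin> T" using assms by auto
  show "\<sigma> \<in> cone n (Fam n T G)"
  proof (cases "n+1 \<in> \<sigma>")
    case False
    then have "\<sigma> \<subseteq> {1..n}" using s unfolding Fam_def by (auto simp: subset_iff le_Suc_eq)
    then show ?thesis using s unfolding Fam_def cone_def by auto
  next
    case True
    let ?\<tau> = "\<sigma> - {n+1}"
    have "?\<tau> \<subseteq> {1..n}" using s unfolding Fam_def by (auto simp: subset_iff le_Suc_eq)
    moreover have "?\<tau> \<inter> G = \<sigma> \<inter> G" "?\<tau> \<inter> T = \<sigma> \<inter> T" using nG by auto
    ultimately have "?\<tau> \<in> Fam n T G" using s unfolding Fam_def by auto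
    moreover have "\<sigma> = insert (n+1) ?\<tau>" using True by auto
    ultimately show ?thesis unfolding cone_def by blast
  qed
qed

lemma card_le1_2: "a \<noteq> b \<Longrightarrow> card (\<sigma> \<inter> {a,b}) \<le> 1 \<longleftrightarrow> \<not> (a \<in> \<sigma> \<and> b \<in> \<sigma>)"
  by (cases "a \<in> \<sigma>"; cases "b \<in> \<sigma>") (auto simp: Int_insert_right)

lemma card_le1_2': "a \<noteq> b \<Longrightarrow> card (\<sigma> \<inter> {a,b}) \<le> Suc 0 \<longleftrightarrow> \<not> (a \<in> \<sigma> \<and> b \<in> \<sigma>)"
  using card_le1_2 by simp

lemma card_le1_3: "a \<noteq> b \<Longrightarrow> a \<noteq> d \<Longrightarrow> b \<noteq> d \<Longrightarrow> card (\<sigma> \<inter> {a,b,d}) \<le> 1 \<longleftrightarrow>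
   \<not> (a \<in> \<sigma> \<and> b \<in> \<sigma>) \<and> \<not> (a \<in> \<sigma> \<and> d \<in> \<sigma>) \<and> \<not> (b \<in> \<sigma> \<and> d \<in> \<sigma>)"
  by (cases "a \<in> \<sigma>"; cases "b \<in> \<sigma>"; cases "d \<in> \<sigma>") (auto simp: Int_insert_right)

lemma card_le1_3': "a \<noteq> b \<Longrightarrow> a \<noteq> d \<Longrightarrow> b \<noteq> d \<Longrightarrow> card (\<sigma> \<inter> {a,b,d}) \<le> Suc 0 \<longleftrightarrow>
   \<not> (a \<in> \<sigma> \<and> b \<in> \<sigma>) \<and> \<not> (a \<in> \<sigma> \<and> d \<in> \<sigma>) \<and> \<not> (b \<in> \<sigma> \<and> d \<in> \<sigma>)"
  using card_le1_3 by simp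

lemma Fam_empty_T: "Fam m {} G = {\<sigma>. \<sigma> \<subseteq> {1..m} \<and> \<sigma> \<inter> G = {}}"
  unfolding Fam_def by auto

lemma dual_Fam:
  assumes "valid n T G"
  shows "\<exists>T' G'. valid n T' G' \<and> alex_dual n (Fam n T G) = Fam n T' G'"
proof -
  have TG: "T \<subseteq> {1..n}" "G \<subseteq> {1..n}" "T \<inter> G = {}" using assms unfolding valid_def by auto
  from assms consider "T = {}" "card G = 1" | "T = {}" "card G = 2" | "G = {}" "card T = 2"
    | "G = {}" "card T = 3" unfolding valid_def by auto
  then show ?thesis
  proof cases
    case 1
    then obtain g where g: "G = {g}" by (auto simp: card_Suc_eq)
    have "alex_dual n (Fam n T G) = Fam n {} G"
      unfolding alex_dual_def Fam_def using 1 g TG by auto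
    then show ?thesis using assms 1 by (metis valid_def)
  next
    case 2
    then obtain g h where g: "G = {g,h}" "g \<noteq> h" by (auto simp: card_2_iff)
    have "alex_dual n (Fam n T G) = Fam n G {}"
      unfolding alex_dual_def Fam_def using 2 g TG by (auto simp: card_le1_2 card_le1_2' Int_insert_right)
    moreover have "valid n G {}" using 2 TG unfolding valid_def by auto
    ultimately show ?thesis by blast
  next
    case 3
    then obtain a b where g: "T = {a,b}" "a \<noteq> b" by (auto simp: card_2_iff)
    have "alex_dual n (Fam n T G) = Fam n {} T"
      unfolding alex_dual_def Fam_def using 3 g TG by (auto simp: card_le1_2 card_le1_2' Int_insert_right)
    moreover have "valid n {} T" using 3 TG unfolding valid_def by auto
    ultimately show ?thesis by blast
  next
    case 4
    then obtain a b d where g: "T = {a,b,d}" "a \<noteq> b" "a \<noteq> d" "b \<noteq> d" by (auto simp: card_3_iff)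
    have "alex_dual n (Fam n T G) = Fam n T {}"
      unfolding alex_dual_def Fam_def using 4 g TG by (auto simp: card_le1_3 card_le1_3' Int_insert_right)
    then show ?thesis using assms 4 by metis
  qed
qed

lemma obtainable_Fam: "obtainable n R \<Longrightarrow> \<exists>T G. valid n T G \<and> R = Fam n T G"
proof (induction rule: obtainable.induct)
  case base_G4
  then show ?case using G4_Fam unfolding valid_def by (intro exI[of _ "{}"] exI[of _ "{3}"]) auto
next
  case base_Gamma4
  then show ?case using Gamma4_Fam unfolding valid_def by (intro exI[of _ "{2,3}"] exI[of _ "{}"]) auto
next
  case base_Gamma6
  then show ?case using Gamma6_Fam unfolding valid_def by (intro exI[of _ "{1,2,3}"] exI[of _ "{}"]) auto
next
  case (cone_step n R)
  then obtain T G where tg: "valid n T G" "R = Fam n T G" by blast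
  then have "valid (n+1) T G" unfolding valid_def by auto
  moreover have "cone n R = Fam (n+1) T G" using tg cone_Fam unfolding valid_def by auto
  ultimately show ?case by blast
next
  case (dual_step n R)
  then show ?case using dual_Fam by blast
qed



lemma image_Fam_sub:
  assumes b: "bij_betw \<pi> {1..m} {1..m}" and T: "T \<subseteq> {1..m}" and G: "G \<subseteq> {1..m}"
  shows "(\<lambda>\<sigma>. \<pi> ` \<sigma>) ` Fam m T G \<subseteq> Fam m (\<pi> ` T) (\<pi> ` G)"
proof
  fix \<sigma> assume "\<sigma> \<in> (\<lambda>\<sigma>. \<pi> ` \<sigma>) ` Fam m T G"
  then obtain \<tau> where \<tau>: "\<tau> \<in> Fam m T G" "\<sigma> = \<pi> ` \<tau>" by blast
  have inj: "inj_on \<pi> {1..m}" and im: "\<pi> ` {1..m} = {1..m}" using b by (auto simp: bij_betw_def)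
  have ts: "\<tau> \<subseteq> {1..m}" using \<tau> unfolding Fam_def by auto
  have 1: "\<sigma> \<subseteq> {1..m}" using ts im \<tau> by auto
  have 2: "\<sigma> \<inter> \<pi> ` G = \<pi> ` (\<tau> \<inter> G)" using inj_on_image_Int[OF inj ts G] \<tau> by simp
  have 3: "\<sigma> \<inter> \<pi> ` T = \<pi> ` (\<tau> \<inter> T)" using inj_on_image_Int[OF inj ts T] \<tau> by simp
  have 4: "card (\<pi> ` (\<tau> \<inter> T)) = card (\<tau> \<inter> T)"
    by (rule card_image, rule inj_on_subset[OF inj]) (use ts in auto)
  show "\<sigma> \<in> Fam m (\<pi> ` T) (\<pi> ` G)" using \<tau> 1 2 3 4 unfolding Fam_def by auto
qed

lemma image_Fam:
  assumes b: "bij_betw \<pi> {1..m} {1..m}" and T: "T \<subseteq> {1..m}" and G: "G \<subseteq> {1..m}"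
  shows "(\<lambda>\<sigma>. \<pi> ` \<sigma>) ` Fam m T G = Fam m (\<pi> ` T) (\<pi> ` G)"
proof
  show "(\<lambda>\<sigma>. \<pi> ` \<sigma>) ` Fam m T G \<subseteq> Fam m (\<pi> ` T) (\<pi> ` G)" by (rule image_Fam_sub[OF assms])
next
  let ?\<psi> = "inv_into {1..m} \<pi>"
  have inj: "inj_on \<pi> {1..m}" and im: "\<pi> ` {1..m} = {1..m}" using b by (auto simp: bij_betw_def)
  have b': "bij_betw ?\<psi> {1..m} {1..m}" using bij_betw_inv_into[OF b] .
  have T': "\<pi> ` T \<subseteq> {1..m}" "\<pi> ` G \<subseteq> {1..m}" using T G im by auto
  have c1: "?\<psi> ` \<pi> ` T = T" "?\<psi> ` \<pi> ` G = G" using inj T G by auto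
  show "Fam m (\<pi> ` T) (\<pi> ` G) \<subseteq> (\<lambda>\<sigma>. \<pi> ` \<sigma>) ` Fam m T G"
  proof
    fix \<sigma> assume s: "\<sigma> \<in> Fam m (\<pi> ` T) (\<pi> ` G)"
    have "?\<psi> ` \<sigma> \<in> Fam m (?\<psi> ` \<pi> ` T) (?\<psi> ` \<pi> ` G)"
      using image_Fam_sub[OF b' T'] s by (meson image_eqI subsetD)
    then have "?\<psi> ` \<sigma> \<in> Fam m T G" by (simp only: c1)
    moreover have "\<pi> ` ?\<psi> ` \<sigma> = \<sigma>"
      by (rule image_inv_into_cancel[OF im]) (use s in \<open>auto simp: Fam_def\<close>)
    ultimately show "\<sigma> \<in> (\<lambda>\<sigma>. \<pi> ` \<sigma>) ` Fam m T G" using rev_image_eqI[of "?\<psi> ` \<sigma>" "Fam m T G" \<sigma> "\<lambda>\<sigma>. \<pi> ` \<sigma>"] by simp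
  qed
qed

lemma valid_image:
  assumes b: "bij_betw \<pi> {1..m} {1..m}" and v: "valid m T G"
  shows "valid m (\<pi> ` T) (\<pi> ` G)"
proof -
  have inj: "inj_on \<pi> {1..m}" and im: "\<pi> ` {1..m} = {1..m}" using b by (auto simp: bij_betw_def)
  have TG: "T \<subseteq> {1..m}" "G \<subseteq> {1..m}" "T \<inter> G = {}" using v unfolding valid_def by auto
  have "card (\<pi> ` T) = card T" by (rule card_image, rule inj_on_subset[OF inj TG(1)])
  moreover have "card (\<pi> ` G) = card G" by (rule card_image, rule inj_on_subset[OF inj TG(2)])
  moreover have "\<pi> ` T \<inter> \<pi> ` G = {}" using inj_on_image_Int[OF inj TG(1,2)] TG(3) by simp
  moreover have "\<pi> ` T \<subseteq> {1..m}" "\<pi> ` G \<subseteq> {1..m}" using TG(1,2) im image_mono by blast+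
  ultimately show ?thesis using v unfolding valid_def by auto
qed

lemma exists_bij:
  assumes "A0 \<subseteq> {1..m}" "A \<subseteq> {1..(m::nat)}" "card A0 = card A"
  shows "\<exists>\<pi>. bij_betw \<pi> {1..m} {1..m} \<and> \<pi> ` A0 = A"
proof -
  have f: "finite A0" "finite A" using assms finite_subset by auto
  obtain f1 where f1: "bij_betw f1 A0 A" using finite_same_card_bij[OF f assms(3)] by blast
  have "card ({1..m} - A0) = card ({1..m} - A)"
    using assms f by (simp add: card_Diff_subset)
  then obtain f2 where f2: "bij_betw f2 ({1..m} - A0) ({1..m} - A)"
    using finite_same_card_bij by (meson finite_Diff finite_atLeastAtMost)
  define \<pi> where "\<pi> x = (if x \<in> A0 then f1 x else f2 x)" for x
  have "bij_betw \<pi> A0 A" using f1 by (rule bij_betw_cong[THEN iffD1, rotated]) (simp add: \<pi>_def)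
  moreover have "bij_betw \<pi> ({1..m} - A0) ({1..m} - A)"
    using f2 by (rule bij_betw_cong[THEN iffD1, rotated]) (simp add: \<pi>_def)
  ultimately have "bij_betw \<pi> (A0 \<union> ({1..m} - A0)) (A \<union> ({1..m} - A))"
    by (rule bij_betw_combine) auto
  moreover have "A0 \<union> ({1..m} - A0) = {1..m}" "A \<union> ({1..m} - A) = {1..m}" using assms by auto
  ultimately have "bij_betw \<pi> {1..m} {1..m}" by simp
  moreover have "\<pi> ` A0 = A" using f1 unfolding bij_betw_def \<pi>_def by auto
  ultimately show ?thesis by blast
qed

lemma obtainable_lift:
  assumes "obtainable 3 (Fam 3 T G)" "T \<subseteq> {1..3}" "G \<subseteq> {1..3}" "m \<ge> 3"
  shows "obtainable m (Fam m T G)"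
  using assms(4)
proof (induction m rule: dec_induct)
  case base then show ?case using assms(1) .
next
  case (step n)
  have "T \<subseteq> {1..n}" "G \<subseteq> {1..n}" using assms(2,3) step(1) by auto
  then show ?case using obtainable.cone_step[OF step(3)] cone_Fam by simp
qed

lemma dual_Fam2:
  assumes "a \<noteq> b" "a \<in> {1..n}" "b \<in> {1..n}"
  shows "alex_dual n (Fam n {a,b} {}) = Fam n {} {a,b}"
  unfolding alex_dual_def Fam_def using assms by (auto simp: card_le1_2 card_le1_2' Int_insert_right)

lemma part2:
  assumes m: "m \<ge> 3"
  shows "(\<exists>T G. valid m T G \<and> K = Fam m T G) \<longleftrightarrow>
    (\<exists>\<pi> R. bij_betw \<pi> {1..m} {1..m} \<and> obtainable m R \<and> K = (\<lambda>\<sigma>. \<pi> ` \<sigma>) ` R)"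
proof
  assume "\<exists>\<pi> R. bij_betw \<pi> {1..m} {1..m} \<and> obtainable m R \<and> K = (\<lambda>\<sigma>. \<pi> ` \<sigma>) ` R"
  then obtain \<pi> R where pr: "bij_betw \<pi> {1..m} {1..m}" "obtainable m R" "K = (\<lambda>\<sigma>. \<pi> ` \<sigma>) ` R" by blast
  obtain T G where tg: "valid m T G" "R = Fam m T G" using obtainable_Fam[OF pr(2)] by blast
  have "K = Fam m (\<pi> ` T) (\<pi> ` G)" using pr(3) tg image_Fam[OF pr(1)] unfolding valid_def by auto
  then show "\<exists>T G. valid m T G \<and> K = Fam m T G" using valid_image[OF pr(1) tg(1)] by blast
next
  assume "\<exists>T G. valid m T G \<and> K = Fam m T G"
  then obtain T G where tg: "valid m T G" "K = Fam m T G" by blast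
  have TG: "T \<subseteq> {1..m}" "G \<subseteq> {1..m}" using tg unfolding valid_def by auto
  have ob1: "obtainable m (Fam m {} {3})"
    by (rule obtainable_lift[OF _ _ _ m]) (auto simp: G4_Fam[symmetric] intro: obtainable.intros)
  have ob4: "obtainable m (Fam m {2,3} {})"
    by (rule obtainable_lift[OF _ _ _ m]) (auto simp: Gamma4_Fam[symmetric] intro: obtainable.intros)
  have ob6: "obtainable m (Fam m {1,2,3} {})"
    by (rule obtainable_lift[OF _ _ _ m]) (auto simp del: One_nat_def simp: Gamma6_Fam[symmetric] intro: obtainable.intros)
  have "{1,2,3} \<notin> Fam 3 {2,3} {}" by (simp add: Fam_def)
  moreover have "{1,2,3} \<in> full_simplex 3" by (auto simp: full_simplex_def)
  ultimately have nf: "Fam 3 {2,3} {} \<noteq> full_simplex 3" by blast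
  have "obtainable 3 (alex_dual 3 (Fam 3 {2,3} {}))"
    by (rule obtainable.dual_step[OF _ nf]) (simp add: Gamma4_Fam[symmetric] obtainable.base_Gamma4)
  moreover have "alex_dual 3 (Fam 3 {2,3} {}) = Fam 3 {} {2,3}"
    by (rule dual_Fam2) auto
  ultimately have ob2: "obtainable m (Fam m {} {2,3})"
    by (intro obtainable_lift[OF _ _ _ m]) auto
  have gen: "\<exists>\<pi> R. bij_betw \<pi> {1..m} {1..m} \<and> obtainable m R \<and> K = (\<lambda>\<sigma>. \<pi> ` \<sigma>) ` R"
    if o: "obtainable m (Fam m T0 G0)" and s: "T0 \<subseteq> {1..m}" "G0 \<subseteq> {1..m}"
      and b: "bij_betw \<pi> {1..m} {1..m}" and e: "\<pi> ` T0 = T" "\<pi> ` G0 = G" for T0 G0 \<pi>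
  proof -
    have "K = (\<lambda>\<sigma>. \<pi> ` \<sigma>) ` Fam m T0 G0" using image_Fam[OF b s] e tg(2) by simp
    then show ?thesis using o b by blast
  qed
  from tg(1) consider "T = {}" "card G = 1" | "T = {}" "card G = 2" | "G = {}" "card T = 2"
    | "G = {}" "card T = 3" unfolding valid_def by auto
  then show "\<exists>\<pi> R. bij_betw \<pi> {1..m} {1..m} \<and> obtainable m R \<and> K = (\<lambda>\<sigma>. \<pi> ` \<sigma>) ` R"
  proof cases
    case 1
    obtain \<pi> where "bij_betw \<pi> {1..m} {1..m}" "\<pi> ` {3} = G"
      using exists_bij[of "{3}" m G] TG 1 m by auto
    then show ?thesis using gen[OF ob1] 1 m by auto
  next
    case 2
    obtain \<pi> where "bij_betw \<pi> {1..m} {1..m}" "\<pi> ` {2,3} = G"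
      using exists_bij[of "{2,3}" m G] TG 2 m by auto
    then show ?thesis using gen[OF ob2] 2 m by auto
  next
    case 3
    obtain \<pi> where "bij_betw \<pi> {1..m} {1..m}" "\<pi> ` {2,3} = T"
      using exists_bij[of "{2,3}" m T] TG 3 m by auto
    then show ?thesis using gen[OF ob4] 3 m by auto
  next
    case 4
    obtain \<pi> where "bij_betw \<pi> {1..m} {1..m}" "\<pi> ` {1,2,3} = T"
      using exists_bij[of "{1,2,3}" m T] TG 4 m by auto
    then show ?thesis using gen[OF ob6] 4 m by auto
  qed
qed



definition proper :: "'a set set \<Rightarrow> nat \<Rightarrow> ('a \<Rightarrow> nat) \<Rightarrow> bool" where
  "proper L k c \<longleftrightarrow> (\<forall>v\<in>vertices L. c v < k) \<and>
      (\<forall>u\<in>vertices L. \<forall>v\<in>vertices L. {u, v} \<in> L \<and> u \<noteq> v \<longrightarrow> c u \<noteq> c v)"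

lemma chrom_eq: "chromatic_number L = (LEAST k. \<exists>c. proper L k c)"
  unfolding chromatic_number_def proper_def ..

lemma sum_split: "(F::('a+'b) set) = Inl ` {x. Inl x \<in> F} \<union> Inr ` {x. Inr x \<in> F}"
  by (rule set_eqI) (case_tac x; auto)

lemma InlInr_eq: "Inl ` I \<union> Inr ` J = Inl ` I' \<union> Inr ` J' \<longleftrightarrow> I = I' \<and> J = J'"
  by blast

lemma three_distinct:
  assumes "3 \<le> card U"
  obtains x y z where "x \<in> U" "y \<in> U" "z \<in> U" "x \<noteq> y" "x \<noteq> z" "y \<noteq> z"
proof -
  obtain V where "V \<subseteq> U" "card V = 3" using obtain_subset_with_card_n[OF assms] by blast
  then show ?thesis using that by (auto simp: card_3_iff)
qed

locale BK =
  fixes m :: nat and K :: "nat set set"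
  assumes m3: "3 \<le> m" and sc: "simplicial_complex m K" and nf: "K \<noteq> full_simplex m"
begin

abbreviation "D \<equiv> alex_dual m K"

lemma K_sub: "\<sigma> \<in> K \<Longrightarrow> \<sigma> \<subseteq> {1..m}" using sc unfolding simplicial_complex_def by auto
lemma K_closed: "\<sigma> \<in> K \<Longrightarrow> \<tau> \<subseteq> \<sigma> \<Longrightarrow> \<tau> \<in> K" using sc unfolding simplicial_complex_def by auto
lemma empty_K: "{} \<in> K" using sc unfolding simplicial_complex_def by auto
lemma full_notin: "{1..m} \<notin> K"
proof
  assume "{1..m} \<in> K"
  then have "Pow {1..m} \<subseteq> K" using K_closed by auto
  moreover have "K \<subseteq> Pow {1..m}" using K_sub by auto
  ultimately show False using nf unfolding full_simplex_def by auto
qed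
lemma D_sub: "J \<in> D \<Longrightarrow> J \<subseteq> {1..m}" unfolding alex_dual_def by auto
lemma D_closed: "J \<in> D \<Longrightarrow> J' \<subseteq> J \<Longrightarrow> J' \<in> D"
  unfolding alex_dual_def using K_closed by blast
lemma D_iff: "J \<in> D \<longleftrightarrow> J \<subseteq> {1..m} \<and> {1..m} - J \<notin> K" unfolding alex_dual_def by auto
lemma empty_D: "{} \<in> D" using full_notin unfolding alex_dual_def by auto

lemma bier_mem: "Inl ` I \<union> Inr ` J \<in> bier m K \<longleftrightarrow> I \<in> K \<and> J \<in> D \<and> I \<inter> J = {}"
proof
  assume "Inl ` I \<union> Inr ` J \<in> bier m K"
  then obtain I' J' where "Inl ` I \<union> Inr ` J = Inl ` I' \<union> Inr ` J'" "I' \<in> K" "J' \<in> D" "I' \<inter> J' = {}"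
    unfolding bier_def by blast
  then show "I \<in> K \<and> J \<in> D \<and> I \<inter> J = {}" unfolding InlInr_eq by simp
next
  assume "I \<in> K \<and> J \<in> D \<and> I \<inter> J = {}"
  then show "Inl ` I \<union> Inr ` J \<in> bier m K" unfolding bier_def by blast
qed

lemma bier_closed:
  assumes "F \<in> bier m K" "F' \<subseteq> F" shows "F' \<in> bier m K"
proof -
  obtain I J where F: "F = Inl ` I \<union> Inr ` J" "I \<in> K" "J \<in> D" "I \<inter> J = {}"
    using assms(1) unfolding bier_def by blast
  let ?I = "{x. Inl x \<in> F'}" and ?J = "{x. Inr x \<in> F'}"
  have "?I \<subseteq> I" "?J \<subseteq> J" using assms(2) F(1) by auto
  then have "?I \<in> K" "?J \<in> D" "?I \<inter> ?J = {}" using F K_closed D_closed by auto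
  then show ?thesis using sum_split[of F'] bier_mem by metis
qed

lemma vert_Inl: "Inl x \<in> vertices (bier m K) \<longleftrightarrow> {x} \<in> K"
proof -
  have "{Inl x} = Inl ` {x} \<union> Inr ` {}" by simp
  then show ?thesis unfolding vertices_def using bier_mem[of "{x}" "{}"] empty_D by simp
qed

lemma vert_Inr: "Inr x \<in> vertices (bier m K) \<longleftrightarrow> {x} \<in> D"
proof -
  have "{Inr x} = Inl ` {} \<union> Inr ` {x}" by simp
  then show ?thesis unfolding vertices_def using bier_mem[of "{}" "{x}"] empty_K by simp
qed

lemma face_card: "finite I \<Longrightarrow> finite J \<Longrightarrow> card (Inl ` I \<union> Inr ` J) = card I + card J"
  by (subst card_Un_disjoint) (auto simp: card_image)

lemma face_finite: assumes "F \<in> bier m K" shows "finite F"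
proof -
  obtain I J where F: "F = Inl ` I \<union> Inr ` J" "I \<in> K" "J \<in> D"
    using assms unfolding bier_def by blast
  have "finite I" using K_sub[OF F(2)] by (rule finite_subset) simp
  moreover have "finite J" using D_sub[OF F(3)] by (rule finite_subset) simp
  ultimately
  show ?thesis using F by simp
qed

lemma face_vert: "F \<in> bier m K \<Longrightarrow> v \<in> F \<Longrightarrow> v \<in> vertices (bier m K)"
  unfolding vertices_def using bier_closed[of F "{v}"] by simp

lemma proper_inj: assumes "proper (bier m K) k c" "F \<in> bier m K" shows "inj_on c F"
proof (rule inj_onI, rule ccontr)
  fix u v assume uv: "u \<in> F" "v \<in> F" "c u = c v" "u \<noteq> v"
  have "{u,v} \<in> bier m K" using bier_closed[OF assms(2)] uv by simp
  moreover have "u \<in> vertices (bier m K)" "v \<in> vertices (bier m K)" using face_vert assms(2) uv by auto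
  ultimately show False using assms(1) uv unfolding proper_def by blast
qed

lemma proper_bound: assumes "proper (bier m K) k c" "F \<in> bier m K" shows "card F \<le> k"
proof -
  have "c ` F \<subseteq> {..<k}" using assms face_vert unfolding proper_def by auto
  then have "card (c ` F) \<le> k" using card_mono[of "{..<k}" "c ` F"] by simp
  then show ?thesis using card_image[OF proper_inj[OF assms]] by simp
qed

lemma facet_exists: "\<exists>F\<in>bier m K. card F = m - 1"
proof -
  have fK: "finite K" using K_sub finite_subset[of K "Pow {1..m}"] by auto
  have ne: "card ` K \<noteq> {}" using empty_K by auto
  have "Max (card ` K) \<in> card ` K" using Max_in[OF finite_imageI[OF fK] ne] .
  then obtain I where I: "I \<in> K" "card I = Max (card ` K)" by (metis imageE)
  have Imax: "card I' \<le> card I" if "I' \<in> K" for I'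
    using I(2) Max_ge[OF finite_imageI[OF fK]] that by auto
  have Isub: "I \<subseteq> {1..m}" using K_sub I by auto
  then have In: "I \<noteq> {1..m}" using full_notin I by auto
  then obtain k where k: "k \<in> {1..m}" "k \<notin> I" using Isub by blast
  have fI: "finite I" using Isub finite_subset by auto
  have nk: "insert k I \<notin> K"
  proof
    assume "insert k I \<in> K"
    then have "card (insert k I) \<le> card I" by (rule Imax)
    then show False using k fI by simp
  qed
  let ?J = "{1..m} - I - {k}"
  have "{1..m} - ?J = insert k I" using Isub k by auto
  then have J: "?J \<in> D" using nk unfolding alex_dual_def by auto
  have F: "Inl ` I \<union> Inr ` ?J \<in> bier m K" using bier_mem I J by auto
  have c1: "card ({1..m} - I) = m - card I" using Isub fI by (simp add: card_Diff_subset)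
  have c2: "card ?J = card ({1..m} - I) - 1" using k by (simp add: card_Diff_singleton)
  have "card I < m" using psubset_card_mono[of "{1..m}" I] Isub In by auto
  then have "card I + card ?J = m - 1" using c1 c2 by simp
  then have "card (Inl ` I \<union> Inr ` ?J) = m - 1" using face_card[OF fI, of ?J] by simp
  then show ?thesis using F by blast
qed

lemma lower: "proper (bier m K) k c \<Longrightarrow> m - 1 \<le> k"
  using facet_exists proper_bound by metis

definition c0 :: "nat + nat \<Rightarrow> nat" where "c0 v = (case v of Inl x \<Rightarrow> x | Inr x \<Rightarrow> x)"

lemma c0_proper: "proper (bier m K) (m+1) c0"
proof -
  have b: "c0 v < m + 1" if "v \<in> vertices (bier m K)" for v
  proof (cases v)
    case (Inl x) then show ?thesis using that vert_Inl K_sub by (fastforce simp: c0_def)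
  next
    case (Inr x) then show ?thesis using that vert_Inr D_sub by (fastforce simp: c0_def)
  qed
  have e: "c0 u \<noteq> c0 v" if "{u,v} \<in> bier m K" "u \<noteq> v" for u v
  proof (cases u; cases v)
    fix x y assume "u = Inl x" "v = Inr y"
    moreover have "Inl ` {x} \<union> Inr ` {y} = {u,v}" using \<open>u = Inl x\<close> \<open>v = Inr y\<close> by auto
    ultimately have "Inl ` {x} \<union> Inr ` {y} \<in> bier m K" using that by simp
    then have "x \<noteq> y" using bier_mem by blast
    then show ?thesis using \<open>u = Inl x\<close> \<open>v = Inr y\<close> by (simp add: c0_def)
  next
    fix x y assume "u = Inr x" "v = Inl y"
    moreover have "Inl ` {y} \<union> Inr ` {x} = {u,v}" using \<open>u = Inr x\<close> \<open>v = Inl y\<close> by auto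
    ultimately have "Inl ` {y} \<union> Inr ` {x} \<in> bier m K" using that by simp
    then have "x \<noteq> y" using bier_mem by blast
    then show ?thesis using \<open>u = Inr x\<close> \<open>v = Inl y\<close> by (simp add: c0_def)
  qed (use that in \<open>auto simp: c0_def\<close>)
  show ?thesis unfolding proper_def using b e by blast
qed

lemma chrom_iff: "chromatic_number (bier m K) = m - 1 \<longleftrightarrow> (\<exists>c. proper (bier m K) (m-1) c)"
proof
  assume "chromatic_number (bier m K) = m - 1"
  then show "\<exists>c. proper (bier m K) (m-1) c"
    using LeastI_ex[of "\<lambda>k. \<exists>c. proper (bier m K) k c"] c0_proper unfolding chrom_eq by metis
next
  assume "\<exists>c. proper (bier m K) (m-1) c"
  then show "chromatic_number (bier m K) = m - 1" unfolding chrom_eq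
  proof (intro Least_equality)
    fix y assume "\<exists>c. proper (bier m K) y c"
    then show "m - 1 \<le> y" using lower by blast
  qed
qed

end



locale BKc = BK +
  fixes c :: "nat + nat \<Rightarrow> nat"
  assumes pc: "proper (bier m K) (m-1) c"
begin

lemma swap:
  assumes F1: "F1 \<in> bier m K" and F2: "F2 \<in> bier m K" and cF: "card F1 = m - 1"
    and u: "u \<in> F1" and v: "v \<in> F2" and eq: "F1 - {u} = F2 - {v}"
  shows "c u = c v"
proof (rule ccontr)
  assume ne: "c u \<noteq> c v"
  have inj1: "inj_on c F1" and inj2: "inj_on c F2" using proper_inj[OF pc] F1 F2 by auto
  have fin: "finite F1" using face_finite F1 by auto
  have sub: "c ` F1 \<subseteq> {..<m-1}" using pc face_vert[OF F1] unfolding proper_def by auto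
  have "card (c ` F1) = m - 1" using card_image[OF inj1] cF by simp
  then have all: "c ` F1 = {..<m-1}" using card_subset_eq[OF _ sub] by simp
  have "c v < m - 1" using pc face_vert[OF F2 v] unfolding proper_def by auto
  then obtain w where w: "w \<in> F1" "c w = c v" using all by (metis imageE lessThan_iff)
  then have "w \<noteq> u" using ne by auto
  then have "w \<in> F2" "w \<noteq> v" using eq w by blast+
  then show False using inj2 v w(2) unfolding inj_on_def by blast
qed

lemma Inl_neq: assumes "x \<noteq> y" "{x,y} \<in> K" shows "c (Inl x) \<noteq> c (Inl y)"
proof -
  have "Inl ` {x,y} \<union> Inr ` {} \<in> bier m K" by (rule bier_mem[THEN iffD2]) (use assms empty_D in auto)
  then have "inj_on c (Inl ` {x,y} \<union> Inr ` {})" using proper_inj[OF pc] by blast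
  then show ?thesis using assms(1) unfolding inj_on_def by auto
qed

lemma Inr_neq: assumes "x \<noteq> y" "{x,y} \<in> D" shows "c (Inr x) \<noteq> c (Inr y)"
proof -
  have "Inl ` {} \<union> Inr ` {x,y} \<in> bier m K" by (rule bier_mem[THEN iffD2]) (use assms empty_K in auto)
  then have "inj_on c (Inl ` {} \<union> Inr ` {x,y})" using proper_inj[OF pc] by blast
  then show ?thesis using assms(1) unfolding inj_on_def by auto
qed

lemma three:
  fixes e :: "nat \<Rightarrow> nat + nat"
  assumes inj: "inj e"
    and fa: "\<And>k. k \<in> U \<Longrightarrow> P \<union> e ` (U - {k}) \<in> bier m K \<and> card (P \<union> e ` (U - {k})) = m - 1"
    and dis: "\<And>k. e k \<notin> P"
    and xyz: "x \<in> U" "y \<in> U" "z \<in> U" "x \<noteq> y" "x \<noteq> z" "y \<noteq> z"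
  shows False
proof -
  let ?\<Phi> = "\<lambda>k. P \<union> e ` (U - {k})"
  have ine: "e a = e b \<longleftrightarrow> a = b" for a b using inj by (simp add: inj_eq)
  have "?\<Phi> z - {e y} = ?\<Phi> y - {e z}" using dis ine by auto
  moreover have "e y \<in> ?\<Phi> z" "e z \<in> ?\<Phi> y" using xyz by auto
  ultimately have 1: "c (e y) = c (e z)" using swap fa xyz by metis
  have "?\<Phi> y - {e x} = ?\<Phi> x - {e y}" using dis ine by auto
  moreover have "e x \<in> ?\<Phi> y" "e y \<in> ?\<Phi> x" using xyz by auto
  ultimately have 2: "c (e x) = c (e y)" using swap fa xyz by metis
  have "inj_on c (?\<Phi> z)" using proper_inj[OF pc] fa xyz by blast
  moreover have "e x \<in> ?\<Phi> z" "e y \<in> ?\<Phi> z" using xyz by auto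
  moreover have "e x \<noteq> e y" using ine xyz by simp
  ultimately show False using 2 unfolding inj_on_def by blast
qed

lemma F_ext:
  assumes I: "I \<in> K" and c3: "3 \<le> card ({1..m} - I)"
  shows "\<exists>k\<in>{1..m} - I. insert k I \<in> K"
proof (rule ccontr)
  assume "\<not> ?thesis"
  then have nk: "insert k I \<notin> K" if "k \<in> {1..m} - I" for k using that by blast
  let ?U = "{1..m} - I"
  have Isub: "I \<subseteq> {1..m}" using K_sub I by auto
  have fI: "finite I" using Isub by (rule finite_subset) simp
  have cU: "card ?U = m - card I" using Isub fI by (simp add: card_Diff_subset)
  obtain x y z where xyz: "x \<in> ?U" "y \<in> ?U" "z \<in> ?U" "x \<noteq> y" "x \<noteq> z" "y \<noteq> z"
    using three_distinct[OF c3] by blast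
  have fa: "Inl ` I \<union> Inr ` (?U - {k}) \<in> bier m K \<and> card (Inl ` I \<union> Inr ` (?U - {k})) = m - 1"
    if k: "k \<in> ?U" for k
  proof
    have "{1..m} - (?U - {k}) = insert k I" using Isub k by auto
    then have "?U - {k} \<in> D" using nk[OF k] D_iff by auto
    then show "Inl ` I \<union> Inr ` (?U - {k}) \<in> bier m K" using bier_mem I by auto
    have "card (?U - {k}) = card ?U - 1" using k by (simp add: card_Diff_singleton)
    then have "card I + card (?U - {k}) = m - 1" using cU c3 by simp
    then show "card (Inl ` I \<union> Inr ` (?U - {k})) = m - 1" using face_card[OF fI, of "?U - {k}"] by simp
  qed
  show False
    by (rule three[of Inr ?U "Inl ` I" x y z]) (use fa xyz in auto)
qed

lemma F_flag:
  assumes N: "N \<subseteq> {1..m}" "N \<notin> K" and c3: "3 \<le> card N"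
  shows "\<exists>k\<in>N. N - {k} \<notin> K"
proof (rule ccontr)
  assume "\<not> ?thesis"
  then have nk: "N - {k} \<in> K" if "k \<in> N" for k using that by blast
  have fN: "finite N" using N(1) by (rule finite_subset) simp
  let ?J = "{1..m} - N"
  have "{1..m} - ?J = N" using N by auto
  then have J: "?J \<in> D" using N D_iff by auto
  have cJ: "card ?J = m - card N" using N fN by (simp add: card_Diff_subset)
  have cN: "card N \<le> m" using card_mono[OF _ N(1)] by simp
  obtain x y z where xyz: "x \<in> N" "y \<in> N" "z \<in> N" "x \<noteq> y" "x \<noteq> z" "y \<noteq> z"
    using three_distinct[OF c3] by blast
  have fa: "Inr ` ?J \<union> Inl ` (N - {k}) \<in> bier m K \<and> card (Inr ` ?J \<union> Inl ` (N - {k})) = m - 1"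
    if k: "k \<in> N" for k
  proof
    have e: "Inr ` ?J \<union> Inl ` (N - {k}) = Inl ` (N - {k}) \<union> Inr ` ?J" by auto
    show "Inr ` ?J \<union> Inl ` (N - {k}) \<in> bier m K" unfolding e using bier_mem nk[OF k] J by auto
    have "card (N - {k}) = card N - 1" using k by (simp add: card_Diff_singleton)
    then have "card (N - {k}) + card ?J = m - 1" using cJ c3 cN by simp
    then show "card (Inr ` ?J \<union> Inl ` (N - {k})) = m - 1"
      unfolding e using face_card[of "N - {k}" ?J] fN by simp
  qed
  show False
    by (rule three[of Inl N "Inr ` ?J" x y z]) (use fa xyz in auto)
qed

lemma F_H:
  assumes xy: "x \<noteq> y" "x \<in> {1..m}" "y \<in> {1..m}" and s: "{x} \<in> K" "{y} \<in> K" and n: "{x,y} \<notin> K"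
  shows "c (Inl x) = c (Inl y)"
proof -
  let ?J = "{1..m} - {x,y}"
  have "{1..m} - ?J = {x,y}" using xy by auto
  then have J: "?J \<in> D" using n D_iff by auto
  have cJ: "card ?J = m - 2" using xy by (simp add: card_Diff_subset)
  have F1: "Inl ` {x} \<union> Inr ` ?J \<in> bier m K" by (rule bier_mem[THEN iffD2]) (use s J in auto)
  have F2: "Inl ` {y} \<union> Inr ` ?J \<in> bier m K" by (rule bier_mem[THEN iffD2]) (use s J in auto)
  have "card (Inl ` {x} \<union> Inr ` ?J) = m - 1" using face_card[of "{x}" ?J] cJ m3 by simp
  moreover have "(Inl ` {x} \<union> Inr ` ?J) - {Inl x} = (Inl ` {y} \<union> Inr ` ?J) - {Inl y}" by auto
  ultimately show ?thesis using swap[OF F1 F2] by simp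
qed

lemma F_P4:
  assumes I: "I \<in> K" and uv: "u \<noteq> v" "u \<in> {1..m}" "v \<in> {1..m}" and Ie: "I = {1..m} - {u,v}"
    and nu: "insert u I \<notin> K" and nv: "insert v I \<notin> K"
  shows "c (Inr u) = c (Inr v)"
proof -
  have "{1..m} - {u} = insert v I" "{1..m} - {v} = insert u I" using Ie uv by auto
  then have Du: "{u} \<in> D" and Dv: "{v} \<in> D" using nu nv uv D_iff by auto
  have cI: "card I = m - 2" using Ie uv by (simp add: card_Diff_subset)
  have fI: "finite I" using Ie by simp
  have F1: "Inl ` I \<union> Inr ` {u} \<in> bier m K" by (rule bier_mem[THEN iffD2]) (use I Du Ie in auto)
  have F2: "Inl ` I \<union> Inr ` {v} \<in> bier m K" by (rule bier_mem[THEN iffD2]) (use I Dv Ie in auto)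
  have "card (Inl ` I \<union> Inr ` {u}) = m - 1" using face_card[OF fI, of "{u}"] cI m3 by simp
  moreover have "(Inl ` I \<union> Inr ` {u}) - {Inr u} = (Inl ` I \<union> Inr ` {v}) - {Inr v}" by auto
  ultimately show ?thesis using swap[OF F1 F2] by simp
qed


definition h :: "nat \<Rightarrow> nat \<Rightarrow> bool" where
  "h x y \<longleftrightarrow> x \<in> {1..m} \<and> y \<in> {1..m} \<and> x \<noteq> y \<and> {x} \<in> K \<and> {y} \<in> K \<and> {x,y} \<notin> K"

lemma h_sym: "h x y \<Longrightarrow> h y x" unfolding h_def by (auto simp: insert_commute)

lemma h_trans: assumes "h x y" "h y z" "x \<noteq> z" shows "h x z"
proof -
  have "c (Inl x) = c (Inl y)" using F_H assms(1) unfolding h_def by blast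
  moreover have "c (Inl y) = c (Inl z)" using F_H assms(2) unfolding h_def by blast
  ultimately have "{x,z} \<notin> K" using Inl_neq assms(3) by metis
  then show ?thesis using assms unfolding h_def by auto
qed

lemma flag_aux:
  "\<sigma> \<subseteq> {1..m} \<Longrightarrow> (\<forall>x\<in>\<sigma>. {x} \<in> K) \<Longrightarrow> (\<forall>x\<in>\<sigma>. \<forall>y\<in>\<sigma>. x \<noteq> y \<longrightarrow> {x,y} \<in> K) \<Longrightarrow> \<sigma> \<in> K"
proof (induction "card \<sigma>" arbitrary: \<sigma> rule: less_induct)
  case less
  have fin: "finite \<sigma>" using less.prems(1) by (rule finite_subset) simp
  show ?case
  proof (cases "card \<sigma> \<le> 2")
    case True
    then consider "card \<sigma> = 0" | "card \<sigma> = 1" | "card \<sigma> = 2" by linarith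
    then show ?thesis
    proof cases
      case 1 then have "\<sigma> = {}" using fin by simp
      then show ?thesis using empty_K by simp
    next
      case 2 then obtain x where "\<sigma> = {x}" by (elim card_1_singletonE)
      then show ?thesis using less.prems by simp
    next
      case 3 then obtain x y where "\<sigma> = {x,y}" "x \<noteq> y" by (auto simp: card_2_iff)
      then show ?thesis using less.prems by simp
    qed
  next
    case False
    show ?thesis
    proof (rule ccontr)
      assume "\<sigma> \<notin> K"
      moreover have "3 \<le> card \<sigma>" using False by simp
      ultimately obtain k where k: "k \<in> \<sigma>" "\<sigma> - {k} \<notin> K" using F_flag[OF less.prems(1)] by blast
      have lt: "card (\<sigma> - {k}) < card \<sigma>" by (rule card_Diff1_less[OF fin k(1)])
      have sub: "\<sigma> - {k} \<subseteq> {1..m}" using less.prems(1) by auto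
      have p2: "\<forall>x\<in>\<sigma> - {k}. {x} \<in> K" using less.prems(2) by simp
      have p3: "\<forall>x\<in>\<sigma> - {k}. \<forall>y\<in>\<sigma> - {k}. x \<noteq> y \<longrightarrow> {x,y} \<in> K" using less.prems(3) by simp
      have "\<sigma> - {k} \<in> K" by (rule less.hyps[OF lt sub p2 p3])
      then show False using k by simp
    qed
  qed
qed

lemma ext: "I \<in> K \<Longrightarrow> \<exists>I'\<in>K. I \<subseteq> I' \<and> card ({1..m} - I') \<le> 2"
proof (induction "card ({1..m} - I)" arbitrary: I rule: less_induct)
  case less
  show ?case
  proof (cases "card ({1..m} - I) \<le> 2")
    case True then show ?thesis using less.prems by blast
  next
    case False
    then obtain k where k: "k \<in> {1..m} - I" "insert k I \<in> K" using F_ext[OF less.prems] by auto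
    have e: "{1..m} - insert k I = ({1..m} - I) - {k}" by auto
    have "card (({1..m} - I) - {k}) < card ({1..m} - I)"
      by (rule card_Diff1_less) (use k(1) in auto)
    then have "card ({1..m} - insert k I) < card ({1..m} - I)" by (simp only: e)
    then obtain I' where "I' \<in> K" "insert k I \<subseteq> I'" "card ({1..m} - I') \<le> 2"
      using less.hyps k(2) by blast
    then show ?thesis by blast
  qed
qed

lemma classify: "\<exists>T G. valid m T G \<and> K = Fam m T G"
proof -
  define G where "G = {i\<in>{1..m}. {i} \<notin> K}"
  define T where "T = {x. \<exists>y. h x y}"
  have hT: "x \<in> T" if "h x y" for x y unfolding T_def using that by blast
  have Tprops: "x \<in> {1..m} \<and> {x} \<in> K" if "x \<in> T" for x using that unfolding T_def h_def by auto
  have GT: "G \<subseteq> {1..m}" "T \<subseteq> {1..m}" "T \<inter> G = {}" using Tprops unfolding G_def by auto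
  have fG: "finite G" using GT(1) by (rule finite_subset) simp
  have fT: "finite T" using GT(2) by (rule finite_subset) simp
  have clique: "h a b" if ab0: "a \<in> T" "b \<in> T" "a \<noteq> b" for a b
  proof (rule ccontr)
    assume nh: "\<not> h a b"
    have ab: "a \<in> {1..m}" "b \<in> {1..m}" "{a} \<in> K" "{b} \<in> K" using Tprops ab0 by auto
    have abK: "{a,b} \<in> K" using nh ab ab0(3) unfolding h_def by auto
    obtain a2 where ha: "h a a2" using ab0(1) unfolding T_def by blast
    obtain b2 where hb: "h b b2" using ab0(2) unfolding T_def by blast
    have a2b: "a2 \<noteq> b" using ha nh by auto
    have b2a: "b2 \<noteq> a" using hb nh h_sym by auto
    have a2b2: "a2 \<noteq> b2"
    proof
      assume "a2 = b2"
      then have "h a2 b" using hb h_sym by simp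
      then have "h a b" using h_trans[OF ha] ab0(3) by blast
      then show False using nh by simp
    qed
    have hpa: "a2 \<in> {1..m}" "{a2} \<in> K" "{a,a2} \<notin> K" "a \<noteq> a2" using ha unfolding h_def by auto
    have hpb: "b2 \<in> {1..m}" "{b2} \<in> K" "{b,b2} \<notin> K" "b \<noteq> b2" using hb unfolding h_def by auto
    obtain I where I: "I \<in> K" "{a,b} \<subseteq> I" "card ({1..m} - I) \<le> 2" using ext[OF abK] by blast
    have Isub: "I \<subseteq> {1..m}" using K_sub I(1) by auto
    have a2I: "a2 \<notin> I"
    proof
      assume "a2 \<in> I" then have "{a,a2} \<subseteq> I" using I(2) by auto
      then show False using K_closed[OF I(1)] hpa by blast
    qed
    have b2I: "b2 \<notin> I"
    proof
      assume "b2 \<in> I" then have "{b,b2} \<subseteq> I" using I(2) by auto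
      then show False using K_closed[OF I(1)] hpb by blast
    qed
    have sub2: "{a2,b2} \<subseteq> {1..m} - I" using a2I b2I hpa hpb by auto
    have "card {a2,b2} = 2" using a2b2 by simp
    then have "{a2,b2} = {1..m} - I" using card_seteq[OF _ sub2] I(3) by simp
    then have Ie: "I = {1..m} - {a2,b2}" using Isub by auto
    have n1: "insert a2 I \<notin> K"
    proof
      assume "insert a2 I \<in> K" then show False using K_closed[of "insert a2 I" "{a,a2}"] I(2) hpa by auto
    qed
    have n2: "insert b2 I \<notin> K"
    proof
      assume "insert b2 I \<in> K" then show False using K_closed[of "insert b2 I" "{b,b2}"] I(2) hpb by auto
    qed
    have 1: "c (Inr a2) = c (Inr b2)" by (rule F_P4[OF I(1) a2b2 hpa(1) hpb(1) Ie n1 n2])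
    define I' where "I' = {1..m} - {a,b2}"
    have I'sub: "I' \<subseteq> I \<union> {a2}" using Ie unfolding I'_def by auto
    have I'K: "I' \<in> K"
    proof (rule flag_aux)
      show "I' \<subseteq> {1..m}" unfolding I'_def by auto
      show "\<forall>x\<in>I'. {x} \<in> K"
      proof
        fix x assume "x \<in> I'"
        then have "x \<in> I \<or> x = a2" using I'sub by auto
        then show "{x} \<in> K" using K_closed[OF I(1)] hpa by auto
      qed
      have pair: "{a2,y} \<in> K" if y: "y \<in> I" "y \<noteq> a" "y \<noteq> a2" for y
      proof (rule ccontr)
        assume "{a2,y} \<notin> K"
        then have "h a2 y" using y hpa Isub K_closed[OF I(1), of "{y}"] unfolding h_def by auto
        then have "h a y" using h_trans[OF ha] y(2) by metis
        then have "{a,y} \<notin> K" unfolding h_def by simp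
        moreover have "{a,y} \<subseteq> I" using y I(2) by auto
        ultimately show False using K_closed[OF I(1)] by blast
      qed
      show "\<forall>x\<in>I'. \<forall>y\<in>I'. x \<noteq> y \<longrightarrow> {x,y} \<in> K"
      proof (intro ballI impI)
        fix x y assume xy: "x \<in> I'" "y \<in> I'" "x \<noteq> y"
        have na: "x \<noteq> a" "y \<noteq> a" using xy unfolding I'_def by auto
        consider "x \<in> I" "y \<in> I" | "x = a2" "y \<in> I" | "y = a2" "x \<in> I" using xy I'sub by auto
        then show "{x,y} \<in> K"
        proof cases
          case 1 then show ?thesis using K_closed[OF I(1), of "{x,y}"] by auto
        next
          case 2 then show ?thesis using pair[of y] na xy by auto
        next
          case 3 then show ?thesis using pair[of x] na xy by (auto simp: insert_commute)
        qed
      qed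
    qed
    have a2I': "a2 \<in> I'" using hpa a2b2 unfolding I'_def by auto
    have bI': "b \<in> I'" using ab ab0(3) hpb unfolding I'_def by auto
    have n3: "insert a I' \<notin> K"
    proof
      assume "insert a I' \<in> K" then show False using K_closed[of "insert a I'" "{a,a2}"] a2I' hpa by auto
    qed
    have n4: "insert b2 I' \<notin> K"
    proof
      assume "insert b2 I' \<in> K" then show False using K_closed[of "insert b2 I'" "{b,b2}"] bI' hpb by auto
    qed
    have 2: "c (Inr a) = c (Inr b2)"
      by (rule F_P4[OF I'K b2a[symmetric] ab(1) hpb(1) I'_def n3 n4])
    have "{b,b2} \<subseteq> {1..m} - {a,a2}" using ab hpb ab0(3) a2b b2a a2b2 by auto
    then have "{1..m} - {a,a2} \<notin> K" using K_closed[of "{1..m} - {a,a2}" "{b,b2}"] hpb(3) by blast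
    then have 3: "{a,a2} \<in> D" using D_iff ab hpa by auto
    show False using Inr_neq[OF hpa(4) 3] 1 2 by simp
  qed
  have KF: "K = Fam m T G"
  proof (rule set_eqI)
    fix \<sigma>
    show "\<sigma> \<in> K \<longleftrightarrow> \<sigma> \<in> Fam m T G"
    proof (cases "\<sigma> \<subseteq> {1..m}")
      case False then show ?thesis using K_sub unfolding Fam_def by auto
    next
      case True
      have fs: "finite (\<sigma> \<inter> T)" using fT by simp
      have e1: "(\<forall>x\<in>\<sigma>. {x} \<in> K) \<longleftrightarrow> \<sigma> \<inter> G = {}" using True unfolding G_def by blast
      have e2: "(\<forall>x\<in>\<sigma>. \<forall>y\<in>\<sigma>. x \<noteq> y \<longrightarrow> {x,y} \<in> K) \<longleftrightarrow> card (\<sigma> \<inter> T) \<le> 1"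
        if s: "\<forall>x\<in>\<sigma>. {x} \<in> K"
      proof
        assume p: "\<forall>x\<in>\<sigma>. \<forall>y\<in>\<sigma>. x \<noteq> y \<longrightarrow> {x,y} \<in> K"
        have "\<forall>a1\<in>\<sigma> \<inter> T. \<forall>a2\<in>\<sigma> \<inter> T. a1 = a2"
        proof (intro ballI, rule ccontr)
          fix a1 a2 assume "a1 \<in> \<sigma> \<inter> T" "a2 \<in> \<sigma> \<inter> T" "a1 \<noteq> a2"
          then show False using clique[of a1 a2] p unfolding h_def by auto
        qed
        then show "card (\<sigma> \<inter> T) \<le> 1" using card_le_Suc0_iff_eq[OF fs] by simp
      next
        assume "card (\<sigma> \<inter> T) \<le> 1"
        then have q: "\<forall>a1\<in>\<sigma> \<inter> T. \<forall>a2\<in>\<sigma> \<inter> T. a1 = a2" using card_le_Suc0_iff_eq[OF fs] by simp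
        show "\<forall>x\<in>\<sigma>. \<forall>y\<in>\<sigma>. x \<noteq> y \<longrightarrow> {x,y} \<in> K"
        proof (intro ballI impI, rule ccontr)
          fix x y assume xy: "x \<in> \<sigma>" "y \<in> \<sigma>" "x \<noteq> y" "{x,y} \<notin> K"
          then have "h x y" using s True unfolding h_def by auto
          then have "x \<in> T" "y \<in> T" using hT h_sym by blast+
          then show False using q xy by auto
        qed
      qed
      show ?thesis
      proof
        assume sK: "\<sigma> \<in> K"
        have s1: "\<forall>x\<in>\<sigma>. {x} \<in> K"
        proof
          fix x assume "x \<in> \<sigma>" then show "{x} \<in> K" using K_closed[OF sK, of "{x}"] by simp
        qed
        have s2: "\<forall>x\<in>\<sigma>. \<forall>y\<in>\<sigma>. x \<noteq> y \<longrightarrow> {x,y} \<in> K"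
        proof (intro ballI impI)
          fix x y assume "x \<in> \<sigma>" "y \<in> \<sigma>" then show "{x,y} \<in> K" using K_closed[OF sK, of "{x,y}"] by simp
        qed
        show "\<sigma> \<in> Fam m T G" using e1 e2[OF s1] s1 s2 True unfolding Fam_def by simp
      next
        assume "\<sigma> \<in> Fam m T G"
        then have f: "\<sigma> \<inter> G = {}" "card (\<sigma> \<inter> T) \<le> 1" unfolding Fam_def by auto
        then have s1: "\<forall>x\<in>\<sigma>. {x} \<in> K" using e1 by simp
        show "\<sigma> \<in> K" by (rule flag_aux[OF True s1]) (use e2[OF s1] f in simp)
      qed
    qed
  qed
  obtain I0 where I0: "I0 \<in> K" "card ({1..m} - I0) \<le> 2" using ext[OF empty_K] by blast
  have "G \<subseteq> {1..m} - I0" using K_closed[OF I0(1)] unfolding G_def by auto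
  then have cG: "card G \<le> 2" using card_mono[of "{1..m} - I0" G] I0(2) by simp
  show ?thesis
  proof (cases "T = {}")
    case True
    have "G \<noteq> {}"
    proof
      assume "G = {}"
      then have "K = Fam m {} {}" using KF True by simp
      also have "\<dots> = full_simplex m" unfolding Fam_def full_simplex_def by auto
      finally show False using nf by simp
    qed
    then have "card G > 0" using fG by (simp add: card_gt_0_iff)
    then have "card G = 1 \<or> card G = 2" using cG by linarith
    then have "valid m T G" using True GT unfolding valid_def by auto
    then show ?thesis using KF by blast
  next
    case False
    then obtain t where t: "t \<in> T" by blast
    then obtain y where hty: "h t y" unfolding T_def by blast
    then have "y \<in> T" "y \<noteq> t" using hT h_sym unfolding h_def by blast+
    then have "{t,y} \<subseteq> T" using t by auto
    moreover have "card {t,y} = 2" using \<open>y \<noteq> t\<close> by simp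
    ultimately have cT2: "2 \<le> card T" using card_mono[OF fT, of "{t,y}"] by simp
    have tK: "{t} \<in> K" using Tprops t by auto
    obtain I where I: "I \<in> K" "{t} \<subseteq> I" "card ({1..m} - I) \<le> 2" using ext[OF tK] by blast
    have "T - {t} \<subseteq> {1..m} - I"
    proof
      fix s assume s: "s \<in> T - {t}"
      then have "h t s" using clique t by auto
      then have "{t,s} \<notin> K" "s \<in> {1..m}" unfolding h_def by auto
      moreover have "s \<in> I \<Longrightarrow> {t,s} \<subseteq> I" using I(2) by auto
      ultimately show "s \<in> {1..m} - I" using K_closed[OF I(1)] by blast
    qed
    moreover have "G \<subseteq> {1..m} - I" using K_closed[OF I(1)] unfolding G_def by auto
    ultimately have "G \<union> (T - {t}) \<subseteq> {1..m} - I" by auto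
    then have "card (G \<union> (T - {t})) \<le> card ({1..m} - I)" by (intro card_mono) auto
    then have "card (G \<union> (T - {t})) \<le> 2" using I(3) by simp
    moreover have "card (G \<union> (T - {t})) = card G + (card T - 1)"
      using card_Un_disjoint[of G "T - {t}"] fG fT GT(3) t by auto
    ultimately have cnt: "card G + card T \<le> 3" using cT2 by simp
    show ?thesis
    proof (cases "G = {}")
      case True
      then have "valid m T G" using cnt cT2 GT False unfolding valid_def by auto
      then show ?thesis using KF by blast
    next
      case Gne: False
      then have "card G > 0" using fG by (simp add: card_gt_0_iff)
      then have "card G = 1" "card T = 2" using cnt cT2 by linarith+
      then obtain g a b where g: "G = {g}" and ab: "T = {a,b}" "a \<noteq> b"
        by (auto simp: card_Suc_eq card_2_iff)
      have gm: "g \<in> {1..m}" "a \<in> {1..m}" "b \<in> {1..m}" using GT g ab by auto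
      have ga: "g \<noteq> a" "g \<noteq> b" using GT g ab by auto
      have mem: "\<sigma> \<in> K \<longleftrightarrow> \<sigma> \<subseteq> {1..m} \<and> g \<notin> \<sigma> \<and> \<not> (a \<in> \<sigma> \<and> b \<in> \<sigma>)" for \<sigma>
        using KF g ab card_le1_2[OF ab(2)] unfolding Fam_def by auto
      have 1: "c (Inr b) = c (Inr g)"
        by (rule F_P4[of "{1..m} - {b,g}"]) (use gm ga ab in \<open>auto simp: mem\<close>)
      have 2: "c (Inr a) = c (Inr g)"
        by (rule F_P4[of "{1..m} - {a,g}"]) (use gm ga ab in \<open>auto simp: mem\<close>)
      have "{a,b} \<in> D" using D_iff gm ga by (auto simp: mem)
      then show ?thesis using Inr_neq[OF ab(2)] 1 2 by simp
    qed
  qed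
qed

end


context BK
begin

lemma family_colorable:
  assumes v: "valid m T G" and KF: "K = Fam m T G"
  shows "\<exists>c. proper (bier m K) (m-1) c"
proof -
  have TG: "T \<subseteq> {1..m}" "G \<subseteq> {1..m}" "T \<inter> G = {}" using v unfolding valid_def by auto
  have ty: "(T = {} \<and> (card G = 1 \<or> card G = 2)) \<or> (G = {} \<and> (card T = 2 \<or> card T = 3))"
    using v unfolding valid_def by auto
  have fT: "finite T" using TG(1) by (rule finite_subset) simp
  have fG: "finite G" using TG(2) by (rule finite_subset) simp
  define S where "S = {1..m} - (T \<union> G)"
  have fS: "finite S" unfolding S_def by simp
  obtain r where r: "bij_betw r S {0..<card S}" using ex_bij_betw_finite_nat[OF fS] by blast
  have rlt: "r i < card S" if "i \<in> S" for i using r that unfolding bij_betw_def by auto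
  have rinj: "i = j" if "r i = r j" "i \<in> S" "j \<in> S" for i j
    using r that unfolding bij_betw_def inj_on_def by auto
  have cTG: "card (T \<union> G) = card T + card G" using card_Un_disjoint[OF fT fG TG(3)] .
  have "card S = m - card (T \<union> G)" unfolding S_def using card_Diff_subset[of "T \<union> G" "{1..m}"] fT fG TG by simp
  moreover have "card (T \<union> G) \<le> m" using card_mono[of "{1..m}" "T \<union> G"] TG by simp
  ultimately have cS: "card S + card T + card G = m" using cTG by simp
  have Kmem: "\<sigma> \<in> K \<longleftrightarrow> \<sigma> \<subseteq> {1..m} \<and> \<sigma> \<inter> G = {} \<and> card (\<sigma> \<inter> T) \<le> 1" for \<sigma>
    using KF unfolding Fam_def by auto
  define col where "col v = (case v of Inl i \<Rightarrow> if i \<in> S then r i else card S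
      | Inr i \<Rightarrow> if i \<in> S then r i else (if card T = 3 then Suc (card S) else card S))" for v
  have colL: "col (Inl i) = (if i \<in> S then r i else card S)" for i unfolding col_def by simp
  have colR: "col (Inr i) = (if i \<in> S then r i else (if card T = 3 then Suc (card S) else card S))" for i
    unfolding col_def by simp
  have vL: "x \<in> {1..m}" "x \<notin> G" if "{x} \<in> K" for x using that Kmem by auto
  have vR: "x \<in> {1..m}" "{1..m} - {x} \<notin> K" if "{x} \<in> D" for x using that D_iff by auto
  have nS: "x \<in> T \<or> x \<in> G" if "x \<in> {1..m}" "x \<notin> S" for x using that unfolding S_def by auto
  have bound: "col v < m - 1" if vv: "v \<in> vertices (bier m K)" for v
  proof (cases v)
    case (Inl x)
    then have xK: "{x} \<in> K" using vv vert_Inl by simp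
    show ?thesis
    proof (cases "x \<in> S")
      case True then show ?thesis using rlt[OF True] Inl colL cS ty by auto
    next
      case False
      then have "x \<in> T" using nS vL[OF xK] by blast
      then have "card T \<ge> 2" using ty by auto
      then show ?thesis using Inl colL False cS m3 by auto
    qed
  next
    case (Inr x)
    then have xD: "{x} \<in> D" using vv vert_Inr by simp
    show ?thesis
    proof (cases "x \<in> S")
      case True then show ?thesis using rlt[OF True] Inr colR cS ty by auto
    next
      case False
      then have xTG: "x \<in> T \<or> x \<in> G" using nS vR[OF xD] by blast
      have "\<not> (T = {} \<and> card G = 1)"
      proof
        assume a: "T = {} \<and> card G = 1"
        then have "G = {x}" using xTG by (auto simp: card_Suc_eq)
        then have "{1..m} - {x} \<in> K" using Kmem a by auto
        then show False using vR[OF xD] by simp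
      qed
      then show ?thesis using Inr colR False cS m3 ty by auto
    qed
  qed
  have mixed: "col (Inl x) \<noteq> col (Inr y)" if f: "{Inl x, Inr y} \<in> bier m K" for x y
  proof -
    have e: "Inl ` {x} \<union> Inr ` {y} = {Inl x, Inr y}" by auto
    have "Inl ` {x} \<union> Inr ` {y} \<in> bier m K" using f by (simp only: e)
    then have xK: "{x} \<in> K" and yD: "{y} \<in> D" and xy: "x \<noteq> y" using bier_mem by blast+
    show ?thesis
    proof (cases "x \<in> S"; cases "y \<in> S")
      assume "x \<in> S" "y \<in> S" then show ?thesis using colL colR rinj xy by auto
    next
      assume "x \<in> S" "y \<notin> S" then show ?thesis using colL colR rlt[of x] rlt[of y] by auto
    next
      assume "x \<notin> S" "y \<in> S" then show ?thesis using colL colR rlt[of x] rlt[of y] by auto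
    next
      assume a: "x \<notin> S" "y \<notin> S"
      then have "x \<in> T" using nS vL[OF xK] by blast
      then have G0: "G = {}" and cT: "card T = 2 \<or> card T = 3" using ty by auto
      have yT: "y \<in> T" using nS vR[OF yD] a G0 by blast
      show ?thesis
      proof (cases "card T = 3")
        case True then show ?thesis using colL colR a by simp
      next
        case False
        then have "card T = 2" using cT by simp
        moreover have "({1..m} - {y}) \<inter> T = T - {y}" using TG by auto
        moreover have "card (T - {y}) = card T - 1" using yT fT by (simp add: card_Diff_singleton)
        ultimately have "card (({1..m} - {y}) \<inter> T) = 1" by simp
        then have "{1..m} - {y} \<in> K" using Kmem G0 by auto
        then show ?thesis using vR[OF yD] by simp
      qed
    qed
  qed
  have edge: "col u \<noteq> col v" if uv: "{u,v} \<in> bier m K" "u \<noteq> v" for u v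
  proof (cases u; cases v)
    fix x y assume u: "u = Inl x" and w: "v = Inl y"
    have e: "Inl ` {x,y} \<union> Inr ` {} = {u,v}" using u w by auto
    have "Inl ` {x,y} \<union> Inr ` {} \<in> bier m K" using uv(1) by (simp only: e)
    then have xyK: "{x,y} \<in> K" using bier_mem by blast
    have xy: "x \<noteq> y" using uv(2) u w by simp
    have xK: "{x} \<in> K" "{y} \<in> K" using K_closed[OF xyK] by auto
    show ?thesis
    proof (cases "x \<in> S"; cases "y \<in> S")
      assume "x \<in> S" "y \<in> S" then show ?thesis using u w colL rinj xy by auto
    next
      assume "x \<in> S" "y \<notin> S" then show ?thesis using u w colL rlt[of x] rlt[of y] by auto
    next
      assume "x \<notin> S" "y \<in> S" then show ?thesis using u w colL rlt[of x] rlt[of y] by auto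
    next
      assume a: "x \<notin> S" "y \<notin> S"
      then have "x \<in> T" "y \<in> T" using nS vL xK by blast+
      then have "{x,y} \<inter> T = {x,y}" by auto
      then have "card ({x,y} \<inter> T) = 2" using xy by simp
      then show ?thesis using Kmem xyK by simp
    qed
  next
    fix x y assume u: "u = Inr x" and w: "v = Inr y"
    have e: "Inl ` {} \<union> Inr ` {x,y} = {u,v}" using u w by auto
    have "Inl ` {} \<union> Inr ` {x,y} \<in> bier m K" using uv(1) by (simp only: e)
    then have xyD: "{x,y} \<in> D" using bier_mem by blast
    have xy: "x \<noteq> y" using uv(2) u w by simp
    have xm: "x \<in> {1..m}" "y \<in> {1..m}" using D_sub[OF xyD] by auto
    have nK: "{1..m} - {x,y} \<notin> K" using xyD D_iff by auto
    show ?thesis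
    proof (cases "x \<in> S"; cases "y \<in> S")
      assume "x \<in> S" "y \<in> S" then show ?thesis using u w colR rinj xy by auto
    next
      assume "x \<in> S" "y \<notin> S" then show ?thesis using u w colR rlt[of x] rlt[of y] by auto
    next
      assume "x \<notin> S" "y \<in> S" then show ?thesis using u w colR rlt[of x] rlt[of y] by auto
    next
      assume a: "x \<notin> S" "y \<notin> S"
      then have xTG: "x \<in> T \<or> x \<in> G" "y \<in> T \<or> y \<in> G" using nS xm by blast+
      have "{1..m} - {x,y} \<in> K"
      proof (cases "T = {}")
        case True
        then have "x \<in> G" "y \<in> G" "card G \<le> 2" using xTG ty by auto
        then have "{x,y} = G" using card_seteq[OF fG, of "{x,y}"] xy by auto
        then show ?thesis using Kmem True by auto
      next
        case False
        then have G0: "G = {}" and cT: "card T \<le> 3" using ty by auto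
        then have "x \<in> T" "y \<in> T" using xTG by auto
        then have "card (T - {x,y}) = card T - 2" using xy fT by (simp add: card_Diff_subset)
        moreover have "({1..m} - {x,y}) \<inter> T = T - {x,y}" using TG by auto
        ultimately show ?thesis using Kmem G0 cT by auto
      qed
      then show ?thesis using nK by simp
    qed
  next
    fix x y assume u: "u = Inl x" and w: "v = Inr y"
    then show ?thesis using mixed uv(1) by simp
  next
    fix x y assume u: "u = Inr x" and w: "v = Inl y"
    have "{Inl y, Inr x} \<in> bier m K" using uv(1) u w by (simp add: insert_commute)
    then show ?thesis using mixed u w by metis
  qed
  have "proper (bier m K) (m-1) col"
    unfolding proper_def using bound edge by blast
  then show ?thesis by blast
qed

end

theorem mainTheorem10:
  fixes m :: nat and K :: "nat set set"
  assumes "m \<ge> 3"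
    and "simplicial_complex m K"
    and "K \<noteq> full_simplex m"
  shows "chromatic_number (bier m K) = m - 1 \<longleftrightarrow>
    (\<exists>\<pi> R. bij_betw \<pi> {1..m} {1..m} \<and> obtainable m R \<and> K = (\<lambda>\<sigma>. \<pi> ` \<sigma>) ` R)"
proof -
  interpret BK m K using assms by unfold_locales auto
  have "chromatic_number (bier m K) = m - 1 \<longleftrightarrow> (\<exists>T G. valid m T G \<and> K = Fam m T G)"
  proof
    assume "chromatic_number (bier m K) = m - 1"
    then obtain c where c: "proper (bier m K) (m-1) c" using chrom_iff by blast
    interpret C: BKc m K c using assms c by unfold_locales auto
    show "\<exists>T G. valid m T G \<and> K = Fam m T G" by (rule C.classify)
  next
    assume "\<exists>T G. valid m T G \<and> K = Fam m T G"
    then obtain T G where "valid m T G" "K = Fam m T G" by blast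
    then show "chromatic_number (bier m K) = m - 1" using family_colorable chrom_iff by blast
  qed
  also have "\<dots> \<longleftrightarrow> (\<exists>\<pi> R. bij_betw \<pi> {1..m} {1..m} \<and> obtainable m R \<and> K = (\<lambda>\<sigma>. \<pi> ` \<sigma>) ` R)"
    by (rule part2[OF assms(1)])
  finally show ?thesis .
qed

end
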